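(* Let $(M,\varepsilon)$ be a local Lie group. Regarding the torsion $T$ as a section of $\Lambda^2(T^*M)\otimes TM$, one has $\widehat dT=0$.
   Context: $M$ is a smooth manifold of dimension $n\ge2$. A splitting $\varepsilon$ assigns to each $(p,q)\in M\times M$ a linear isomorphism $\varepsilon(p,q):T_pM\to T_qM$, smooth in $(p,q)$, with $\varepsilon(q,r)\circ\varepsilon(p,q)=\varepsilon(p,r)$, $\varepsilon(p,p)=\mathrm{id}$. In coordinates $\varepsilon(p,q)=(\varepsilon^i_j(x,y))$; set $\Gamma^i_{kj}(x)=[\partial\varepsilon^i_j(x,y)/\partial y^k]_{y=x}$ (summation convention). The torsion is $T^i_{jk}=\Gamma^i_{jk}-\Gamma^i_{kj}$. $(M,\varepsilon)$ is a local Lie group if the system $\partial f^i(x)/\partial x^j=\varepsilon^i_j(x,f(x))$ is completely integrable (for all $p,q$ there is a local diffeomorphism $f$ near $p$ with $f(p)=q$ and $df_x=\varepsilon(x,f(x))$); equivalently $\widehat{\mathfrak{R}}=0$, with $\widehat{\mathfrak{R}}^i_{rj,k}=\partial_r\Gamma^i_{kj}+\Gamma^a_{kr}\Gamma^i_{aj}-\partial_j\Gamma^i_{kr}-\Gamma^a_{kj}\Gamma^i_{ar}$. For a $TM$-valued $2$-form $\phi=(\phi^i_{kj})$, $(\widehat d\phi)^i_{rkj}=\widehat d_r\phi^i_{kj}-\widehat d_k\phi^i_{rj}-\widehat d_j\phi^i_{kr}$, where $\widehat d_r\phi^i_{kj}=\partial_r\phi^i_{kj}-\Gamma^i_{ar}\phi^a_{kj}$.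 *)

theory Defs
  imports "HOL-Analysis.Analysis"
begin

text \<open>Everything is done in a single coordinate chart: an open set U of R^n.
  Points are vectors of type real^'n; the splitting is a matrix-valued function
  eps (x,y) whose entry (i,j) is eps^i_j(x,y).\<close>

text \<open>C-infinity real-valued functions on an open set (coinductively: differentiable,
  and every directional derivative is again smooth).\<close>
coinductive smooth_on :: "'a::euclidean_space set \<Rightarrow> ('a \<Rightarrow> real) \<Rightarrow> bool" where
  "f differentiable_on U \<Longrightarrow> (\<forall>v. smooth_on U (\<lambda>x. frechet_derivative f (at x) v))
     \<Longrightarrow> smooth_on U f"

definition pd :: "(real^'n \<Rightarrow> real) \<Rightarrow> 'n \<Rightarrow> real^'n \<Rightarrow> real" where
  "pd f r x = frechet_derivative f (at x) (axis r 1)"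

definition splitting :: "(real^'n) set \<Rightarrow> ((real^'n) \<times> (real^'n) \<Rightarrow> real^'n^'n) \<Rightarrow> bool" where
  "splitting U eps \<longleftrightarrow>
     (\<forall>i j. smooth_on (U \<times> U) (\<lambda>z. eps z $ i $ j)) \<and>
     (\<forall>p\<in>U. \<forall>q\<in>U. invertible (eps (p,q))) \<and>
     (\<forall>p\<in>U. \<forall>q\<in>U. \<forall>r\<in>U. eps (q,r) ** eps (p,q) = eps (p,r)) \<and>
     (\<forall>p\<in>U. eps (p,p) = mat 1)"

text \<open>Local Lie group: the system df^i/dx^j = eps^i_j(x,f(x)) is completely integrable,
  i.e. for all p, q there is a local solution f near p with f(p) = q.\<close>
definition local_lie_group :: "(real^'n) set \<Rightarrow> ((real^'n) \<times> (real^'n) \<Rightarrow> real^'n^'n) \<Rightarrow> bool" where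
  "local_lie_group U eps \<longleftrightarrow> splitting U eps \<and>
     (\<forall>p\<in>U. \<forall>q\<in>U. \<exists>V f. open V \<and> p \<in> V \<and> V \<subseteq> U \<and> f ` V \<subseteq> U \<and> f p = q \<and>
        (\<forall>x\<in>V. (f has_derivative (\<lambda>v. eps (x, f x) *v v)) (at x)))"

text \<open>Christoffel-type symbols: Chr eps x i k j = Gamma^i_{kj}(x) = d eps^i_j(x,y)/d y^k at y = x.\<close>
definition Chr :: "((real^'n) \<times> (real^'n) \<Rightarrow> real^'n^'n) \<Rightarrow> real^'n \<Rightarrow> 'n \<Rightarrow> 'n \<Rightarrow> 'n \<Rightarrow> real" where
  "Chr eps x i k j = pd (\<lambda>y. eps (x,y) $ i $ j) k x"

definition torsion :: "((real^'n) \<times> (real^'n) \<Rightarrow> real^'n^'n) \<Rightarrow> real^'n \<Rightarrow> 'n \<Rightarrow> 'n \<Rightarrow> 'n \<Rightarrow> real" where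
  "torsion eps x i j k = Chr eps x i j k - Chr eps x i k j"

text \<open>For a TM-valued 2-form phi (phi x i k j = phi^i_{kj}(x)):
  hat_d_r phi^i_{kj} = d_r phi^i_{kj} - Gamma^i_{ar} phi^a_{kj}.\<close>
definition hat_d_comp :: "((real^'n) \<times> (real^'n) \<Rightarrow> real^'n^'n) \<Rightarrow> (real^'n \<Rightarrow> 'n \<Rightarrow> 'n \<Rightarrow> 'n \<Rightarrow> real)
    \<Rightarrow> real^'n \<Rightarrow> 'n \<Rightarrow> 'n \<Rightarrow> 'n \<Rightarrow> 'n \<Rightarrow> real" where
  "hat_d_comp eps phi x r i k j =
     pd (\<lambda>y. phi y i k j) r x - (\<Sum>a\<in>UNIV. Chr eps x i a r * phi x a k j)"

definition hat_d :: "((real^'n) \<times> (real^'n) \<Rightarrow> real^'n^'n) \<Rightarrow> (real^'n \<Rightarrow> 'n \<Rightarrow> 'n \<Rightarrow> 'n \<Rightarrow> real)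
    \<Rightarrow> real^'n \<Rightarrow> 'n \<Rightarrow> 'n \<Rightarrow> 'n \<Rightarrow> 'n \<Rightarrow> real" where
  "hat_d eps phi x i r k j =
     hat_d_comp eps phi x r i k j - hat_d_comp eps phi x k i r j - hat_d_comp eps phi x j i k r"

end

theory Submission
  imports Defs
begin


lemma sum_axis [simp]: "(\<Sum>m\<in>UNIV. (axis k (1::real))$m * c m) = c k"
proof -
  have "(\<Sum>m\<in>UNIV. (axis k (1::real))$m * c m) = (\<Sum>m\<in>UNIV. if m = k then c m else 0)"
    by (rule sum.cong) (auto simp: axis_def)
  then show ?thesis by simp
qed

lemma sum_axis2 [simp]: "(\<Sum>m\<in>UNIV. (s *\<^sub>R axis k (1::real) + t *\<^sub>R axis r 1)$m * c m) = s * c k + t * c r"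
proof -
  have "(\<Sum>m\<in>UNIV. (s *\<^sub>R axis k (1::real) + t *\<^sub>R axis r 1)$m * c m)
     = (\<Sum>m\<in>UNIV. s * ((axis k 1)$m * c m) + t * ((axis r 1)$m * c m))"
    by (rule sum.cong) (simp_all add: algebra_simps)
  also have "\<dots> = s * c k + t * c r" by (simp only: sum.distrib sum_distrib_left[symmetric] sum_axis)
  finally show ?thesis .
qed

lemma young_aux:
  fixes f :: "real^'n \<Rightarrow> real" and g :: "'n \<Rightarrow> real^'n \<Rightarrow> real"
  assumes V: "open V" "x0 \<in> V"
    and fd: "\<And>y. y \<in> V \<Longrightarrow> (f has_derivative (\<lambda>v. \<Sum>m\<in>UNIV. v$m * g m y)) (at y)"
    and gd: "(g k has_derivative (\<lambda>w. \<Sum>m\<in>UNIV. w$m * h m)) (at x0)"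
    and e: "e > 0"
  shows "\<exists>T>0. \<forall>t. 0 < t \<and> t < T \<longrightarrow>
    \<bar>f (x0 + t *\<^sub>R axis k 1 + t *\<^sub>R axis r 1) - f (x0 + t *\<^sub>R axis k 1)
      - f (x0 + t *\<^sub>R axis r 1) + f x0 - t^2 * h r\<bar> \<le> 3*e*t^2"
proof -
  obtain d0 where d0: "d0>0" "ball x0 d0 \<subseteq> V" using V open_contains_ball by blast
  from gd e obtain d1 where d1: "d1>0" "\<And>y. norm (y - x0) < d1 \<Longrightarrow>
      norm (g k y - g k x0 - (\<Sum>m\<in>UNIV. (y-x0)$m * h m)) \<le> e * norm (y - x0)"
    unfolding has_derivative_at_alt by blast
  define T where "T = min d0 d1 / 2"
  show ?thesis
  proof (intro exI[of _ T] conjI allI impI)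
    show "T>0" using d0 d1 by (simp add: T_def)
    fix t :: real assume t: "0<t \<and> t<T"
    let ?u = "axis k 1 :: real^'n" let ?v = "axis r 1 :: real^'n"
    have nrm: "norm (s *\<^sub>R ?u + a *\<^sub>R ?v) \<le> s + a" if "0 \<le> s" "0 \<le> a" for s a
    proof -
      have "norm (s *\<^sub>R ?u + a *\<^sub>R ?v) \<le> norm (s *\<^sub>R ?u) + norm (a *\<^sub>R ?v)" by (rule norm_triangle_ineq)
      also have "\<dots> = s + a" using that by simp
      finally show ?thesis .
    qed
    have close: "norm (s *\<^sub>R ?u + a *\<^sub>R ?v) < min d0 d1"
      if "0 \<le> s" "s \<le> t" "0 \<le> a" "a \<le> t" for s a
      using nrm[OF that(1,3)] that t by (simp add: T_def)
    have inV: "x0 + s *\<^sub>R ?u + a *\<^sub>R ?v \<in> V"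
      if "0 \<le> s" "s \<le> t" "0 \<le> a" "a \<le> t" for s a
    proof -
      have "dist x0 (x0 + s *\<^sub>R ?u + a *\<^sub>R ?v) = norm (s *\<^sub>R ?u + a *\<^sub>R ?v)"
        by (metis add.assoc add_diff_cancel_left' dist_commute dist_norm)
      then have "dist x0 (x0 + s *\<^sub>R ?u + a *\<^sub>R ?v) < d0"
        using close[OF that] by simp
      then show ?thesis using d0 by auto
    qed
    define \<phi> where "\<phi> s = f (x0 + s *\<^sub>R ?u + t *\<^sub>R ?v) - f (x0 + s *\<^sub>R ?u + 0 *\<^sub>R ?v)" for s
    have derf: "((\<lambda>s. f (x0 + s *\<^sub>R ?u + a *\<^sub>R ?v)) has_derivative (\<lambda>d. d * g k (x0 + s *\<^sub>R ?u + a *\<^sub>R ?v))) (at s)"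
      if "0 \<le> s" "s \<le> t" "0 \<le> a" "a \<le> t" for s a
    proof -
      have h1: "((\<lambda>s. x0 + s *\<^sub>R ?u + a *\<^sub>R ?v) has_derivative (\<lambda>d. d *\<^sub>R ?u)) (at s)"
        by (auto intro!: derivative_eq_intros)
      have "((\<lambda>s. f (x0 + s *\<^sub>R ?u + a *\<^sub>R ?v)) has_derivative
          (\<lambda>d. \<Sum>m\<in>UNIV. (d *\<^sub>R ?u)$m * g m (x0 + s *\<^sub>R ?u + a *\<^sub>R ?v))) (at s)"
        by (rule has_derivative_compose[OF h1 fd[OF inV[OF that]]])
      moreover have "(\<lambda>d. \<Sum>m\<in>UNIV. (d *\<^sub>R ?u)$m * g m (x0 + s *\<^sub>R ?u + a *\<^sub>R ?v))
          = (\<lambda>d. d * g k (x0 + s *\<^sub>R ?u + a *\<^sub>R ?v))"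
        by (simp add: mult.assoc sum_distrib_left[symmetric])
      ultimately show ?thesis by simp
    qed
    have derphi: "(\<phi> has_derivative (\<lambda>d. d * (g k (x0 + s *\<^sub>R ?u + t *\<^sub>R ?v) - g k (x0 + s *\<^sub>R ?u + 0 *\<^sub>R ?v)))) (at s)"
      if "0 \<le> s" "s \<le> t" for s
    proof -
      have "(\<phi> has_derivative (\<lambda>d. d * g k (x0 + s *\<^sub>R ?u + t *\<^sub>R ?v) - d * g k (x0 + s *\<^sub>R ?u + 0 *\<^sub>R ?v))) (at s)"
        unfolding \<phi>_def[abs_def]
        by (rule has_derivative_diff[OF derf derf]) (use that t in auto)
      then show ?thesis by (simp add: right_diff_distrib)
    qed
    have cont: "continuous_on {0..t} \<phi>"
      using derphi by (meson atLeastAtMost_iff continuous_at_imp_continuous_on has_derivative_continuous)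
    define F where "F s d = d * (g k (x0 + s *\<^sub>R ?u + t *\<^sub>R ?v) - g k (x0 + s *\<^sub>R ?u + 0 *\<^sub>R ?v))" for s d
    have dd: "(\<phi> has_derivative F s) (at s)" if "0 < s" "s < t" for s
      unfolding F_def using derphi that by simp
    have tpos: "0 < t" using t by simp
    obtain \<sigma> where sig: "0 < \<sigma>" "\<sigma> < t" and mv0: "\<phi> t - \<phi> 0 = F \<sigma> (t - 0)"
      by (rule mvt[OF tpos cont dd])
    have mv: "\<phi> t - \<phi> 0 = (t - 0) * (g k (x0 + \<sigma> *\<^sub>R ?u + t *\<^sub>R ?v) - g k (x0 + \<sigma> *\<^sub>R ?u + 0 *\<^sub>R ?v))"
      using mv0 by (simp add: F_def)
    have est: "\<bar>g k (x0 + \<sigma> *\<^sub>R ?u + a *\<^sub>R ?v) - g k x0 - (\<sigma> * h k + a * h r)\<bar> \<le> e * (\<sigma> + a)"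
      if "0 \<le> a" "a \<le> t" for a
    proof -
      let ?y = "x0 + \<sigma> *\<^sub>R ?u + a *\<^sub>R ?v"
      have yx: "?y - x0 = \<sigma> *\<^sub>R ?u + a *\<^sub>R ?v" by simp
      have "norm (?y - x0) < d1" using close[of \<sigma> a] sig that by (simp add: add.assoc)
      from d1(2)[OF this] have "norm (g k ?y - g k x0 - (\<Sum>m\<in>UNIV. (\<sigma> *\<^sub>R ?u + a *\<^sub>R ?v)$m * h m)) \<le> e * norm (\<sigma> *\<^sub>R ?u + a *\<^sub>R ?v)"
        unfolding yx .
      then have "\<bar>g k ?y - g k x0 - (\<sigma> * h k + a * h r)\<bar> \<le> e * norm (\<sigma> *\<^sub>R ?u + a *\<^sub>R ?v)"
        unfolding sum_axis2 real_norm_def .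
      also have "\<dots> \<le> e * (\<sigma> + a)" using nrm[of \<sigma> a] sig that e by (intro mult_left_mono) auto
      finally show ?thesis .
    qed
    have e1: "\<bar>g k (x0 + \<sigma> *\<^sub>R ?u + t *\<^sub>R ?v) - g k x0 - (\<sigma> * h k + t * h r)\<bar> \<le> e * (\<sigma> + t)"
      using est[of t] t by simp
    have e2: "\<bar>g k (x0 + \<sigma> *\<^sub>R ?u + 0 *\<^sub>R ?v) - g k x0 - (\<sigma> * h k + 0 * h r)\<bar> \<le> e * (\<sigma> + 0)"
      using est[of 0] t by simp
    have "\<bar>(g k (x0 + \<sigma> *\<^sub>R ?u + t *\<^sub>R ?v) - g k (x0 + \<sigma> *\<^sub>R ?u + 0 *\<^sub>R ?v)) - t * h r\<bar> \<le> e * (\<sigma> + t) + e * \<sigma>"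
      using e1 e2 by simp
    also have "\<dots> \<le> 3 * e * t" using sig e by (simp add: algebra_simps)
    finally have E: "\<bar>(g k (x0 + \<sigma> *\<^sub>R ?u + t *\<^sub>R ?v) - g k (x0 + \<sigma> *\<^sub>R ?u + 0 *\<^sub>R ?v)) - t * h r\<bar> \<le> 3 * e * t" .
    have "\<phi> t - \<phi> 0 - t^2 * h r = t * ((g k (x0 + \<sigma> *\<^sub>R ?u + t *\<^sub>R ?v) - g k (x0 + \<sigma> *\<^sub>R ?u + 0 *\<^sub>R ?v)) - t * h r)"
      using mv by (simp add: power2_eq_square algebra_simps)
    then have "\<bar>\<phi> t - \<phi> 0 - t^2 * h r\<bar> \<le> t * (3 * e * t)"
      using E t by (simp add: abs_mult mult_left_mono)
    moreover have "\<phi> t - \<phi> 0 = f (x0 + t *\<^sub>R ?u + t *\<^sub>R ?v) - f (x0 + t *\<^sub>R ?u) - f (x0 + t *\<^sub>R ?v) + f x0"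
      by (simp add: \<phi>_def)
    ultimately show "\<bar>f (x0 + t *\<^sub>R ?u + t *\<^sub>R ?v) - f (x0 + t *\<^sub>R ?u)
      - f (x0 + t *\<^sub>R ?v) + f x0 - t^2 * h r\<bar> \<le> 3*e*t^2"
      by (simp add: power2_eq_square algebra_simps)
  qed
qed


lemma young:
  fixes f :: "real^'n \<Rightarrow> real" and g :: "'n \<Rightarrow> real^'n \<Rightarrow> real" and h :: "'n \<Rightarrow> 'n \<Rightarrow> real"
  assumes V: "open V" "x0 \<in> V"
    and fd: "\<And>y. y \<in> V \<Longrightarrow> (f has_derivative (\<lambda>v. \<Sum>m\<in>UNIV. v$m * g m y)) (at y)"
    and gd: "\<And>k. (g k has_derivative (\<lambda>w. \<Sum>m\<in>UNIV. w$m * h k m)) (at x0)"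
  shows "h k r = h r k"
proof (rule ccontr)
  assume ne: "h k r \<noteq> h r k"
  define e where "e = \<bar>h k r - h r k\<bar> / 8"
  have e: "e > 0" using ne by (simp add: e_def)
  obtain T1 where T1: "T1>0" "\<forall>t. 0 < t \<and> t < T1 \<longrightarrow>
    \<bar>f (x0 + t *\<^sub>R axis k 1 + t *\<^sub>R axis r 1) - f (x0 + t *\<^sub>R axis k 1)
      - f (x0 + t *\<^sub>R axis r 1) + f x0 - t^2 * h k r\<bar> \<le> 3*e*t^2"
    using young_aux[OF V fd gd[of k] e, of r] by blast
  obtain T2 where T2: "T2>0" "\<forall>t. 0 < t \<and> t < T2 \<longrightarrow>
    \<bar>f (x0 + t *\<^sub>R axis r 1 + t *\<^sub>R axis k 1) - f (x0 + t *\<^sub>R axis r 1)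
      - f (x0 + t *\<^sub>R axis k 1) + f x0 - t^2 * h r k\<bar> \<le> 3*e*t^2"
    using young_aux[OF V fd gd[of r] e, of k] by blast
  define t where "t = min T1 T2 / 2"
  have t: "0<t" "t<T1" "t<T2" using T1 T2 by (auto simp: t_def)
  have eq: "x0 + t *\<^sub>R axis r 1 + t *\<^sub>R axis k 1 = x0 + t *\<^sub>R axis k 1 + t *\<^sub>R axis r 1"
    by (simp add: algebra_simps)
  define D where "D = f (x0 + t *\<^sub>R axis k 1 + t *\<^sub>R axis r 1) - f (x0 + t *\<^sub>R axis k 1)
      - f (x0 + t *\<^sub>R axis r 1) + f x0"
  have a: "\<bar>D - t^2 * h k r\<bar> \<le> 3*e*t^2" using T1(2) t unfolding D_def by blast
  have b0: "\<bar>f (x0 + t *\<^sub>R axis r 1 + t *\<^sub>R axis k 1) - f (x0 + t *\<^sub>R axis r 1)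
      - f (x0 + t *\<^sub>R axis k 1) + f x0 - t^2 * h r k\<bar> \<le> 3*e*t^2" using T2(2) t by blast
  have b: "\<bar>D - t^2 * h r k\<bar> \<le> 3*e*t^2"
    using b0 unfolding eq D_def by argo
  have "t^2 * \<bar>h k r - h r k\<bar> = \<bar>(D - t^2 * h r k) - (D - t^2 * h k r)\<bar>"
  proof -
    have "(D - t^2 * h r k) - (D - t^2 * h k r) = t^2 * (h k r - h r k)" by (simp add: algebra_simps)
    then show ?thesis by (simp add: abs_mult)
  qed
  also have "\<dots> \<le> \<bar>D - t^2 * h r k\<bar> + \<bar>D - t^2 * h k r\<bar>" by (rule abs_triangle_ineq4)
  also have "\<dots> \<le> t^2 * (6 * e)" using a b by (simp add: algebra_simps)
  also have "\<dots> = t^2 * (3/4 * \<bar>h k r - h r k\<bar>)" by (simp add: e_def)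
  finally have "t^2 * \<bar>h k r - h r k\<bar> \<le> t^2 * (3/4 * \<bar>h k r - h r k\<bar>)" .
  moreover have "t^2 > 0" using t by simp
  ultimately have "\<bar>h k r - h r k\<bar> \<le> 3/4 * \<bar>h k r - h r k\<bar>" by (metis mult_le_cancel_left_pos)
  then show False using ne by simp
qed



lemma smooth_on_has_deriv:
  assumes "smooth_on S f" "open S" "z \<in> S"
  shows "(f has_derivative frechet_derivative f (at z)) (at z)"
proof -
  from assms(1) have "f differentiable_on S" by (cases rule: smooth_on.cases) auto
  then have "f differentiable (at z)"
    using assms(2,3) differentiable_on_eq_differentiable_at by blast
  then show ?thesis by (rule frechet_derivative_works[THEN iffD1])
qed

lemma smooth_on_deriv:
  assumes "smooth_on S f"
  shows "smooth_on S (\<lambda>x. frechet_derivative f (at x) v)"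
  using assms by (cases rule: smooth_on.cases) auto

lemma smooth_on_differentiable:
  assumes "smooth_on S f" "open S" "z \<in> S"
  shows "f differentiable (at z)"
  using smooth_on_has_deriv[OF assms] unfolding differentiable_def by blast

lemma mat1_right [simp]: "(\<Sum>m\<in>UNIV. c m * (mat 1 :: real^'n^'n)$m$j) = c j"
proof -
  have "(\<Sum>m\<in>UNIV. c m * (mat 1 :: real^'n^'n)$m$j) = (\<Sum>m\<in>UNIV. if m = j then c m else 0)"
    by (rule sum.cong) (auto simp: mat_def)
  then show ?thesis by simp
qed

lemma mat1_left [simp]: "(\<Sum>m\<in>UNIV. (mat 1 :: real^'n^'n)$i$m * c m) = c i"
proof -
  have "(\<Sum>m\<in>UNIV. (mat 1 :: real^'n^'n)$i$m * c m) = (\<Sum>m\<in>UNIV. if m = i then c m else 0)"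
    by (rule sum.cong) (auto simp: mat_def)
  then show ?thesis by (simp add: eq_commute[of i])
qed

lemma mv_axis [simp]: "((A::real^'n^'m) *v axis r 1) $ b = A$b$r"
proof -
  have "((A::real^'n^'m) *v axis r 1) $ b = (\<Sum>c\<in>UNIV. (axis r 1)$c * A$b$c)"
    by (simp add: matrix_vector_mult_def mult.commute)
  then show ?thesis by simp
qed

lemma lin_expand:
  fixes L :: "real^'n \<Rightarrow> real" assumes "linear L"
  shows "L v = (\<Sum>r\<in>UNIV. v$r * L (axis r 1))"
proof -
  have "v = (\<Sum>r\<in>UNIV. v$r *\<^sub>R axis r 1)" using basis_expansion[of v] by (simp add: scalar_mult_eq_scaleR)
  then have "L v = L (\<Sum>r\<in>UNIV. v$r *\<^sub>R axis r 1)" by simp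
  also have "\<dots> = (\<Sum>r\<in>UNIV. v$r * L (axis r 1))" using assms by (simp add: linear_sum linear_scale)
  finally show ?thesis .
qed

definition DD :: "((real^'n) \<times> (real^'n) \<Rightarrow> real^'n^'n) \<Rightarrow> 'n \<Rightarrow> 'n \<Rightarrow> (real^'n) \<times> (real^'n) \<Rightarrow> (real^'n) \<times> (real^'n) \<Rightarrow> real" where
  "DD eps i j z = frechet_derivative (\<lambda>z. eps z $ i $ j) (at z)"

locale lsp =
  fixes U :: "(real^'n) set" and eps :: "(real^'n) \<times> (real^'n) \<Rightarrow> real^'n^'n"
  assumes opn: "open U" and spl: "splitting U eps"
begin

lemma smooth: "smooth_on (U \<times> U) (\<lambda>z. eps z $ i $ j)"
  using spl unfolding splitting_def by blast

lemma cocycle: "p \<in> U \<Longrightarrow> q \<in> U \<Longrightarrow> r \<in> U \<Longrightarrow> eps (q,r) ** eps (p,q) = eps (p,r)"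
  using spl unfolding splitting_def by blast

lemma diag: "p \<in> U \<Longrightarrow> eps (p,p) = mat 1"
  using spl unfolding splitting_def by blast

lemma opn2: "open (U \<times> U)" using opn by (simp add: open_Times)

lemma e_diff: "z \<in> U \<times> U \<Longrightarrow> ((\<lambda>z. eps z $ i $ j) has_derivative DD eps i j z) (at z)"
  unfolding DD_def using smooth_on_has_deriv[OF smooth opn2] by blast

lemma DD_lin: "z \<in> U \<times> U \<Longrightarrow> linear (DD eps i j z)"
  using e_diff has_derivative_linear by blast

lemma DD_diff: "z \<in> U \<times> U \<Longrightarrow> (\<lambda>z. DD eps i j z w) differentiable (at z)"
  unfolding DD_def using smooth_on_differentiable[OF smooth_on_deriv[OF smooth] opn2] by blast

lemma DD_split: "z \<in> U \<times> U \<Longrightarrow> DD eps i j z (a,b) = DD eps i j z (a,0) + DD eps i j z (0,b)"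
proof -
  assume z: "z \<in> U \<times> U"
  have "DD eps i j z (a,b) = DD eps i j z ((a,0) + (0,b))" by simp
  also have "\<dots> = DD eps i j z (a,0) + DD eps i j z (0,b)" by (rule linear_add[OF DD_lin[OF z]])
  finally show ?thesis .
qed

lemma d2: "p \<in> U \<Longrightarrow> q \<in> U \<Longrightarrow> ((\<lambda>y. eps (p,y) $ i $ j) has_derivative (\<lambda>b. DD eps i j (p,q) (0,b))) (at q)"
proof -
  assume pq: "p \<in> U" "q \<in> U"
  have h: "((\<lambda>y. (p,y)) has_derivative (\<lambda>b. (0,b))) (at q)"
    by (rule has_derivative_Pair[OF has_derivative_const has_derivative_ident])
  show ?thesis using has_derivative_compose[OF h e_diff[of "(p,q)"]] pq by simp
qed

lemma d1: "p \<in> U \<Longrightarrow> q \<in> U \<Longrightarrow> ((\<lambda>y. eps (y,q) $ i $ j) has_derivative (\<lambda>a. DD eps i j (p,q) (a,0))) (at p)"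
proof -
  assume pq: "p \<in> U" "q \<in> U"
  have h: "((\<lambda>y. (y,q)) has_derivative (\<lambda>a. (a,0))) (at p)"
    by (rule has_derivative_Pair[OF has_derivative_ident has_derivative_const])
  show ?thesis using has_derivative_compose[OF h e_diff[of "(p,q)"]] pq by simp
qed

lemma Chr_eq: "x \<in> U \<Longrightarrow> Chr eps x i k j = DD eps i j (x,x) (0, axis k 1)"
proof -
  assume x: "x \<in> U"
  have "(\<lambda>b. DD eps i j (x,x) (0,b)) = frechet_derivative (\<lambda>y. eps (x,y)$i$j) (at x)"
    by (rule frechet_derivative_at[OF d2[OF x x]])
  from fun_cong[OF this, of "axis k 1"] show ?thesis unfolding Chr_def pd_def by simp
qed

lemma DD2_expand: "p \<in> U \<Longrightarrow> q \<in> U \<Longrightarrow> DD eps i j (p,q) (0,b) = (\<Sum>m\<in>UNIV. b$m * DD eps i j (p,q) (0, axis m 1))"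
proof -
  assume pq: "p \<in> U" "q \<in> U"
  have "linear (\<lambda>b. DD eps i j (p,q) (0,b))" using d2[OF pq] has_derivative_linear by blast
  from lin_expand[OF this] show ?thesis .
qed

lemma L1: "p \<in> U \<Longrightarrow> q \<in> U \<Longrightarrow> DD eps i j (p,q) (0,b) = (\<Sum>a\<in>UNIV. DD eps i a (q,q) (0,b) * eps (p,q) $ a $ j)"
proof -
  assume p: "p \<in> U" and q: "q \<in> U"
  have hd: "((\<lambda>y. \<Sum>a\<in>UNIV. eps (q,y) $ i $ a * eps (p,q) $ a $ j) has_derivative
      (\<lambda>b. \<Sum>a\<in>UNIV. DD eps i a (q,q) (0,b) * eps (p,q) $ a $ j)) (at q)"
    by (intro has_derivative_sum has_derivative_mult_left d2 q)
  have eqU: "(\<Sum>a\<in>UNIV. eps (q,y) $ i $ a * eps (p,q) $ a $ j) = eps (p,y) $ i $ j" if "y \<in> U" for y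
  proof -
    have "eps (p,y) $ i $ j = (eps (q,y) ** eps (p,q)) $ i $ j" using cocycle[OF p q that] by simp
    then show ?thesis by (simp add: matrix_matrix_mult_def)
  qed
  have "((\<lambda>y. eps (p,y) $ i $ j) has_derivative (\<lambda>b. \<Sum>a\<in>UNIV. DD eps i a (q,q) (0,b) * eps (p,q) $ a $ j)) (at q)"
    by (rule has_derivative_transform_within_open[OF hd opn q eqU])
  from has_derivative_unique[OF d2[OF p q] this] show ?thesis by metis
qed

lemma L1': "p \<in> U \<Longrightarrow> q \<in> U \<Longrightarrow> DD eps i j (p,q) (a,0) = - (\<Sum>m\<in>UNIV. eps (p,q) $ i $ m * DD eps m j (p,p) (0,a))"
proof -
  assume p: "p \<in> U" and q: "q \<in> U"
  have hd: "((\<lambda>y. \<Sum>m\<in>UNIV. eps (y,q) $ i $ m * eps (p,y) $ m $ j) has_derivative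
      (\<lambda>a. \<Sum>m\<in>UNIV. eps (p,q) $ i $ m * DD eps m j (p,p) (0,a) + DD eps i m (p,q) (a,0) * eps (p,p) $ m $ j)) (at p)"
    by (intro has_derivative_sum has_derivative_mult d2 d1 p q)
  have eqU: "(\<Sum>m\<in>UNIV. eps (y,q) $ i $ m * eps (p,y) $ m $ j) = eps (p,q) $ i $ j" if "y \<in> U" for y
  proof -
    have "eps (p,q) $ i $ j = (eps (y,q) ** eps (p,y)) $ i $ j" using cocycle[OF p that q] by simp
    then show ?thesis by (simp add: matrix_matrix_mult_def)
  qed
  have "((\<lambda>y. eps (p,q) $ i $ j) has_derivative
      (\<lambda>a. \<Sum>m\<in>UNIV. eps (p,q) $ i $ m * DD eps m j (p,p) (0,a) + DD eps i m (p,q) (a,0) * eps (p,p) $ m $ j)) (at p)"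
    by (rule has_derivative_transform_within_open[OF hd opn p eqU])
  from has_derivative_unique[OF has_derivative_const this]
  have "0 = (\<Sum>m\<in>UNIV. eps (p,q) $ i $ m * DD eps m j (p,p) (0,a) + DD eps i m (p,q) (a,0) * eps (p,p) $ m $ j)"
    by metis
  then show ?thesis using diag[OF p] by (simp add: sum.distrib)
qed

lemma Chr_has_deriv: "x \<in> U \<Longrightarrow> ((\<lambda>y. Chr eps y i k j) has_derivative frechet_derivative (\<lambda>y. Chr eps y i k j) (at x)) (at x)"
proof -
  assume x: "x \<in> U"
  have d: "(\<lambda>y. (y,y)) differentiable (at x)"
    unfolding differentiable_def using has_derivative_Pair[OF has_derivative_ident has_derivative_ident] by blast
  have "((\<lambda>z. DD eps i j z (0, axis k 1)) \<circ> (\<lambda>y. (y,y))) differentiable (at x)"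
    by (rule differentiable_chain_at[OF d]) (use x DD_diff in auto)
  then obtain D where D: "((\<lambda>y. DD eps i j (y,y) (0, axis k 1)) has_derivative D) (at x)"
    unfolding differentiable_def o_def by blast
  have "((\<lambda>y. Chr eps y i k j) has_derivative D) (at x)"
    by (rule has_derivative_transform_within_open[OF D opn x]) (simp add: Chr_eq)
  then show ?thesis using frechet_derivative_at by metis
qed

lemma Chr_deriv: "x \<in> U \<Longrightarrow> ((\<lambda>y. Chr eps y i k j) has_derivative (\<lambda>w. \<Sum>r\<in>UNIV. w$r * pd (\<lambda>y. Chr eps y i k j) r x)) (at x)"
proof -
  assume x: "x \<in> U"
  have l: "linear (frechet_derivative (\<lambda>y. Chr eps y i k j) (at x))"
    using Chr_has_deriv[OF x] has_derivative_linear by blast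
  have "frechet_derivative (\<lambda>y. Chr eps y i k j) (at x) = (\<lambda>w. \<Sum>r\<in>UNIV. w$r * pd (\<lambda>y. Chr eps y i k j) r x)"
    unfolding pd_def by (rule ext) (rule lin_expand[OF l])
  then show ?thesis
    by (intro has_derivative_eq_rhs[OF Chr_has_deriv[OF x]])
qed

lemma tors_deriv: "x \<in> U \<Longrightarrow> ((\<lambda>y. torsion eps y i k j) has_derivative
   (\<lambda>w. \<Sum>r\<in>UNIV. w$r * (pd (\<lambda>y. Chr eps y i k j) r x - pd (\<lambda>y. Chr eps y i j k) r x))) (at x)"
proof -
  assume x: "x \<in> U"
  have "((\<lambda>y. Chr eps y i k j - Chr eps y i j k) has_derivative
   (\<lambda>w. (\<Sum>r\<in>UNIV. w$r * pd (\<lambda>y. Chr eps y i k j) r x) - (\<Sum>r\<in>UNIV. w$r * pd (\<lambda>y. Chr eps y i j k) r x))) (at x)"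
    by (intro has_derivative_diff Chr_deriv x)
  then show ?thesis unfolding torsion_def by (simp add: right_diff_distrib sum_subtractf)
qed

lemma pd_tors: "x \<in> U \<Longrightarrow> pd (\<lambda>y. torsion eps y i k j) r x = pd (\<lambda>y. Chr eps y i k j) r x - pd (\<lambda>y. Chr eps y i j k) r x"
proof -
  assume x: "x \<in> U"
  have "(\<lambda>w. \<Sum>r\<in>UNIV. w$r * (pd (\<lambda>y. Chr eps y i k j) r x - pd (\<lambda>y. Chr eps y i j k) r x))
     = frechet_derivative (\<lambda>y. torsion eps y i k j) (at x)"
    by (rule frechet_derivative_at[OF tors_deriv[OF x]])
  from fun_cong[OF this, of "axis r 1"] show ?thesis unfolding pd_def[of "\<lambda>y. torsion eps y i k j"] by simp
qed

end



context lsp begin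

lemma DD2_Chr: "y \<in> U \<Longrightarrow> DD eps i a (y,y) (0,v) = (\<Sum>m\<in>UNIV. v$m * Chr eps y i m a)"
proof -
  assume y: "y \<in> U"
  show ?thesis by (subst DD2_expand[OF y y]) (simp add: Chr_eq[OF y])
qed

lemma swap_lemma: "(\<Sum>a\<in>UNIV. (\<Sum>m\<in>UNIV. (v::real^'n)$m * C m a) * E a) = (\<Sum>m\<in>UNIV. v$m * (\<Sum>a\<in>UNIV. C m a * E a))"
proof -
  have "(\<Sum>a\<in>UNIV. (\<Sum>m\<in>UNIV. v$m * C m a) * E a) = (\<Sum>a\<in>UNIV. \<Sum>m\<in>UNIV. v$m * (C m a * E a))"
    by (simp add: sum_distrib_right mult.assoc)
  also have "\<dots> = (\<Sum>m\<in>UNIV. \<Sum>a\<in>UNIV. v$m * (C m a * E a))" by (rule sum.swap)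
  also have "\<dots> = (\<Sum>m\<in>UNIV. v$m * (\<Sum>a\<in>UNIV. C m a * E a))" by (simp add: sum_distrib_left)
  finally show ?thesis .
qed

lemma curv:
  assumes x: "x \<in> U"
  shows "pd (\<lambda>y. Chr eps y i k j) r x + (\<Sum>a\<in>UNIV. Chr eps x i k a * Chr eps x a r j)
      = pd (\<lambda>y. Chr eps y i r j) k x + (\<Sum>a\<in>UNIV. Chr eps x i r a * Chr eps x a k j)"
proof -
  define h where "h k r = pd (\<lambda>y. Chr eps y i k j) r x + (\<Sum>a\<in>UNIV. Chr eps x i k a * Chr eps x a r j)" for k r
  define g where "g k q = (\<Sum>a\<in>UNIV. Chr eps q i k a * eps (x,q)$a$j)" for k q
  have fd: "((\<lambda>q. eps (x,q)$i$j) has_derivative (\<lambda>v. \<Sum>m\<in>UNIV. v$m * g m y)) (at y)" if y: "y \<in> U" for y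
  proof -
    have e: "(\<lambda>b. DD eps i j (x,y) (0,b)) = (\<lambda>v. \<Sum>m\<in>UNIV. v$m * g m y)"
    proof (rule ext)
      fix v
      have "DD eps i j (x,y) (0,v) = (\<Sum>a\<in>UNIV. DD eps i a (y,y) (0,v) * eps (x,y)$a$j)" by (rule L1[OF x y])
      also have "\<dots> = (\<Sum>a\<in>UNIV. (\<Sum>m\<in>UNIV. v$m * Chr eps y i m a) * eps (x,y)$a$j)"
        by (simp only: DD2_Chr[OF y])
      also have "\<dots> = (\<Sum>m\<in>UNIV. v$m * g m y)" unfolding g_def by (rule swap_lemma)
      finally show "DD eps i j (x,y) (0,v) = (\<Sum>m\<in>UNIV. v$m * g m y)" .
    qed
    show ?thesis using d2[OF x y, of i j] unfolding e .
  qed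
  have gd: "(g k has_derivative (\<lambda>w. \<Sum>m\<in>UNIV. w$m * h k m)) (at x)" for k
  proof -
    have hd: "(g k has_derivative (\<lambda>w. \<Sum>a\<in>UNIV. Chr eps x i k a * DD eps a j (x,x) (0,w)
        + (\<Sum>r\<in>UNIV. w$r * pd (\<lambda>y. Chr eps y i k a) r x) * eps (x,x)$a$j)) (at x)"
      unfolding g_def[abs_def] by (intro has_derivative_sum has_derivative_mult Chr_deriv d2 x)
    have e: "(\<lambda>w. \<Sum>a\<in>UNIV. Chr eps x i k a * DD eps a j (x,x) (0,w)
        + (\<Sum>r\<in>UNIV. w$r * pd (\<lambda>y. Chr eps y i k a) r x) * eps (x,x)$a$j) = (\<lambda>w. \<Sum>m\<in>UNIV. w$m * h k m)"
    proof (rule ext)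
      fix w :: "real^'n"
      have "(\<Sum>a\<in>UNIV. Chr eps x i k a * DD eps a j (x,x) (0,w)
        + (\<Sum>r\<in>UNIV. w$r * pd (\<lambda>y. Chr eps y i k a) r x) * eps (x,x)$a$j)
        = (\<Sum>a\<in>UNIV. Chr eps x i k a * DD eps a j (x,x) (0,w))
          + (\<Sum>a\<in>UNIV. (\<Sum>r\<in>UNIV. w$r * pd (\<lambda>y. Chr eps y i k a) r x) * (mat 1 :: real^'n^'n)$a$j)"
        using diag[OF x] by (simp add: sum.distrib)
      also have "\<dots> = (\<Sum>a\<in>UNIV. Chr eps x i k a * (\<Sum>m\<in>UNIV. w$m * Chr eps x a m j))
          + (\<Sum>r\<in>UNIV. w$r * pd (\<lambda>y. Chr eps y i k j) r x)"
        by (simp only: DD2_Chr[OF x] mat1_right)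
      also have "(\<Sum>a\<in>UNIV. Chr eps x i k a * (\<Sum>m\<in>UNIV. w$m * Chr eps x a m j))
          = (\<Sum>m\<in>UNIV. w$m * (\<Sum>a\<in>UNIV. Chr eps x i k a * Chr eps x a m j))"
      proof -
        have "(\<Sum>a\<in>UNIV. Chr eps x i k a * (\<Sum>m\<in>UNIV. w$m * Chr eps x a m j))
            = (\<Sum>a\<in>UNIV. \<Sum>m\<in>UNIV. w$m * (Chr eps x i k a * Chr eps x a m j))"
          by (simp add: sum_distrib_left mult.left_commute)
        also have "\<dots> = (\<Sum>m\<in>UNIV. \<Sum>a\<in>UNIV. w$m * (Chr eps x i k a * Chr eps x a m j))" by (rule sum.swap)
        also have "\<dots> = (\<Sum>m\<in>UNIV. w$m * (\<Sum>a\<in>UNIV. Chr eps x i k a * Chr eps x a m j))"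
          by (simp add: sum_distrib_left)
        finally show ?thesis .
      qed
      finally show "(\<Sum>a\<in>UNIV. Chr eps x i k a * DD eps a j (x,x) (0,w)
        + (\<Sum>r\<in>UNIV. w$r * pd (\<lambda>y. Chr eps y i k a) r x) * eps (x,x)$a$j) = (\<Sum>m\<in>UNIV. w$m * h k m)"
        unfolding h_def by (simp add: sum.distrib distrib_left)
    qed
    show ?thesis using hd unfolding e .
  qed
  have "h k r = h r k" by (rule young[OF opn x fd gd])
  then show ?thesis unfolding h_def .
qed

end


context lsp begin

lemma inv:
  assumes LL: "local_lie_group U eps" and p: "p \<in> U" and q: "q \<in> U"
  shows "(\<Sum>b\<in>UNIV. \<Sum>a\<in>UNIV. eps (p,q)$b$r * eps (p,q)$a$j * torsion eps q i b a)
       = (\<Sum>m\<in>UNIV. eps (p,q)$i$m * torsion eps p m r j)"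
proof -
  obtain V f where V: "open V" "p \<in> V" "V \<subseteq> U" "f ` V \<subseteq> U" "f p = q"
    and fd: "\<forall>x\<in>V. (f has_derivative (\<lambda>v. eps (x, f x) *v v)) (at x)"
    using LL p q unfolding local_lie_group_def by blast
  define F where "F = eps (p,q)"
  define h where "h j r = DD eps i j (p,q) (axis r 1, F *v axis r 1)" for j r
  define g where "g j y = eps (y, f y)$i$j" for j y
  have fd': "((\<lambda>y. f y $ i) has_derivative (\<lambda>v. \<Sum>m\<in>UNIV. v$m * g m y)) (at y)" if y: "y \<in> V" for y
  proof -
    have "((\<lambda>y. f y $ i) has_derivative (\<lambda>v. (eps (y, f y) *v v) $ i)) (at y)"
      using bounded_linear.has_derivative[OF bounded_linear_vec_nth fd[rule_format, OF y]] .
    moreover have "(\<lambda>v. (eps (y, f y) *v v) $ i) = (\<lambda>v. \<Sum>m\<in>UNIV. v$m * g m y)"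
      by (rule ext) (simp add: matrix_vector_mult_def g_def mult.commute)
    ultimately show ?thesis by simp
  qed
  have gd: "(g j has_derivative (\<lambda>w. \<Sum>m\<in>UNIV. w$m * h j m)) (at p)" for j
  proof -
    have fp: "(f has_derivative (\<lambda>v. F *v v)) (at p)" using fd V unfolding F_def by auto
    have pair: "((\<lambda>y. (y, f y)) has_derivative (\<lambda>w. (w, F *v w))) (at p)"
      by (rule has_derivative_Pair[OF has_derivative_ident fp])
    have pqU: "(p, f p) \<in> U \<times> U" using p q V by simp
    have hd: "(g j has_derivative (\<lambda>w. DD eps i j (p,q) (w, F *v w))) (at p)"
      using has_derivative_compose[OF pair e_diff[OF pqU, of i j]] V(5) unfolding g_def[abs_def] by simp
    have l: "linear (\<lambda>w. DD eps i j (p,q) (w, F *v w))" using hd has_derivative_linear by blast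
    have "(\<lambda>w. DD eps i j (p,q) (w, F *v w)) = (\<lambda>w. \<Sum>m\<in>UNIV. w$m * h j m)"
      unfolding h_def by (rule ext) (rule lin_expand[OF l])
    then show ?thesis using hd by simp
  qed
  have sym: "h j r = h r j" for j r by (rule young[OF V(1,2) fd' gd])
  have hform: "h j r = - (\<Sum>m\<in>UNIV. F$i$m * Chr eps p m r j) + (\<Sum>a\<in>UNIV. (\<Sum>b\<in>UNIV. F$b$r * Chr eps q i b a) * F$a$j)" for j r
  proof -
    have pq: "(p,q) \<in> U \<times> U" using p q by simp
    have "h j r = DD eps i j (p,q) (axis r 1, 0) + DD eps i j (p,q) (0, F *v axis r 1)"
      unfolding h_def by (rule DD_split[OF pq])
    also have "DD eps i j (p,q) (axis r 1, 0) = - (\<Sum>m\<in>UNIV. F$i$m * Chr eps p m r j)"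
      unfolding F_def by (simp only: L1'[OF p q] Chr_eq[OF p])
    also have "DD eps i j (p,q) (0, F *v axis r 1) = (\<Sum>a\<in>UNIV. (\<Sum>b\<in>UNIV. F$b$r * Chr eps q i b a) * F$a$j)"
      unfolding F_def by (simp only: L1[OF p q] DD2_Chr[OF q] mv_axis)
    finally show ?thesis .
  qed
  have A: "(\<Sum>b\<in>UNIV. \<Sum>a\<in>UNIV. F$b$r * F$a$j * Chr eps q i b a) = (\<Sum>a\<in>UNIV. (\<Sum>b\<in>UNIV. F$b$r * Chr eps q i b a) * F$a$j)"
  proof -
    have "(\<Sum>b\<in>UNIV. \<Sum>a\<in>UNIV. F$b$r * F$a$j * Chr eps q i b a) = (\<Sum>a\<in>UNIV. \<Sum>b\<in>UNIV. F$b$r * F$a$j * Chr eps q i b a)"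
      by (rule sum.swap)
    also have "\<dots> = (\<Sum>a\<in>UNIV. (\<Sum>b\<in>UNIV. F$b$r * Chr eps q i b a) * F$a$j)"
      by (simp add: sum_distrib_left sum_distrib_right mult_ac)
    finally show ?thesis .
  qed
  have B: "(\<Sum>b\<in>UNIV. \<Sum>a\<in>UNIV. F$b$r * F$a$j * Chr eps q i a b) = (\<Sum>a\<in>UNIV. (\<Sum>b\<in>UNIV. F$b$j * Chr eps q i b a) * F$a$r)"
    by (simp add: sum_distrib_left mult_ac)
  have "(\<Sum>b\<in>UNIV. \<Sum>a\<in>UNIV. F$b$r * F$a$j * torsion eps q i b a)
      = (\<Sum>b\<in>UNIV. \<Sum>a\<in>UNIV. F$b$r * F$a$j * Chr eps q i b a) - (\<Sum>b\<in>UNIV. \<Sum>a\<in>UNIV. F$b$r * F$a$j * Chr eps q i a b)"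
    unfolding torsion_def by (simp add: right_diff_distrib sum_subtractf)
  also have "\<dots> = (\<Sum>a\<in>UNIV. (\<Sum>b\<in>UNIV. F$b$r * Chr eps q i b a) * F$a$j) - (\<Sum>a\<in>UNIV. (\<Sum>b\<in>UNIV. F$b$j * Chr eps q i b a) * F$a$r)"
    unfolding A B ..
  also have "\<dots> = (\<Sum>m\<in>UNIV. F$i$m * Chr eps p m r j) - (\<Sum>m\<in>UNIV. F$i$m * Chr eps p m j r)"
    using sym[of j r] unfolding hform by simp
  also have "\<dots> = (\<Sum>m\<in>UNIV. F$i$m * torsion eps p m r j)"
    unfolding torsion_def by (simp add: right_diff_distrib sum_subtractf)
  finally show ?thesis unfolding F_def .
qed

end


lemma mat1_right' [simp]: "(\<Sum>m\<in>UNIV. (mat 1 :: real^'n^'n)$m$j * c m) = c j"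
  using mat1_right[of c j] by (simp add: mult.commute)
lemma mat1_left' [simp]: "(\<Sum>m\<in>UNIV. c m * (mat 1 :: real^'n^'n)$i$m) = c i"
  using mat1_left[of i c] by (simp add: mult.commute)

context lsp begin

lemma E1:
  assumes LL: "local_lie_group U eps" and x: "x \<in> U"
  shows "pd (\<lambda>y. torsion eps y i r j) s x = (\<Sum>m\<in>UNIV. Chr eps x i s m * torsion eps x m r j)
     - (\<Sum>b\<in>UNIV. Chr eps x b s r * torsion eps x i b j) - (\<Sum>a\<in>UNIV. Chr eps x a s j * torsion eps x i r a)"
proof -
  define T' where "T' b a w = (\<Sum>m\<in>UNIV. w$m * (pd (\<lambda>y. Chr eps y i b a) m x - pd (\<lambda>y. Chr eps y i a b) m x))" for b a and w :: "real^'n"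
  have hL: "((\<lambda>q. \<Sum>b\<in>UNIV. \<Sum>a\<in>UNIV. eps (x,q)$b$r * eps (x,q)$a$j * torsion eps q i b a) has_derivative
     (\<lambda>w. \<Sum>b\<in>UNIV. \<Sum>a\<in>UNIV. eps (x,x)$b$r * eps (x,x)$a$j * T' b a w
        + (eps (x,x)$b$r * DD eps a j (x,x) (0,w) + DD eps b r (x,x) (0,w) * eps (x,x)$a$j) * torsion eps x i b a)) (at x)"
    unfolding T'_def by (intro has_derivative_sum has_derivative_mult d2 tors_deriv x)
  have hR: "((\<lambda>q. \<Sum>m\<in>UNIV. eps (x,q)$i$m * torsion eps x m r j) has_derivative
     (\<lambda>w. \<Sum>m\<in>UNIV. DD eps i m (x,x) (0,w) * torsion eps x m r j)) (at x)"
    by (intro has_derivative_sum has_derivative_mult_left d2 x)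
  have eqU: "(\<Sum>b\<in>UNIV. \<Sum>a\<in>UNIV. eps (x,q)$b$r * eps (x,q)$a$j * torsion eps q i b a)
     = (\<Sum>m\<in>UNIV. eps (x,q)$i$m * torsion eps x m r j)" if "q \<in> U" for q
    by (rule inv[OF LL x that])
  have hL': "((\<lambda>q. \<Sum>m\<in>UNIV. eps (x,q)$i$m * torsion eps x m r j) has_derivative
     (\<lambda>w. \<Sum>b\<in>UNIV. \<Sum>a\<in>UNIV. eps (x,x)$b$r * eps (x,x)$a$j * T' b a w
        + (eps (x,x)$b$r * DD eps a j (x,x) (0,w) + DD eps b r (x,x) (0,w) * eps (x,x)$a$j) * torsion eps x i b a)) (at x)"
    by (rule has_derivative_transform_within_open[OF hL opn x eqU])
  from has_derivative_unique[OF hL' hR]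
  have "(\<Sum>b\<in>UNIV. \<Sum>a\<in>UNIV. eps (x,x)$b$r * eps (x,x)$a$j * T' b a (axis s 1)
        + (eps (x,x)$b$r * DD eps a j (x,x) (0,axis s 1) + DD eps b r (x,x) (0,axis s 1) * eps (x,x)$a$j) * torsion eps x i b a)
     = (\<Sum>m\<in>UNIV. DD eps i m (x,x) (0,axis s 1) * torsion eps x m r j)"
    by metis
  moreover have "T' b a (axis s 1) = pd (\<lambda>y. torsion eps y i b a) s x" for b a
    unfolding T'_def by (simp add: pd_tors[OF x])
  ultimately have "(\<Sum>b\<in>UNIV. \<Sum>a\<in>UNIV. (mat 1::real^'n^'n)$b$r * (mat 1::real^'n^'n)$a$j * pd (\<lambda>y. torsion eps y i b a) s x
        + ((mat 1::real^'n^'n)$b$r * Chr eps x a s j + Chr eps x b s r * (mat 1::real^'n^'n)$a$j) * torsion eps x i b a)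
     = (\<Sum>m\<in>UNIV. Chr eps x i s m * torsion eps x m r j)"
    by (simp add: diag[OF x] Chr_eq[OF x])
  moreover have "(\<Sum>b\<in>UNIV. \<Sum>a\<in>UNIV. Chr eps x a s j * (torsion eps x i b a * (mat 1::real^'n^'n) $ b $ r))
      = (\<Sum>a\<in>UNIV. Chr eps x a s j * torsion eps x i r a)"
    by (subst sum.swap) (simp add: sum_distrib_left[symmetric])
  ultimately show ?thesis
    by (simp add: sum.distrib distrib_right algebra_simps sum_distrib_left[symmetric])
qed

end


theorem proposition10:
  fixes U :: "(real^'n) set" and eps :: "(real^'n) \<times> (real^'n) \<Rightarrow> real^'n^'n"
  assumes "CARD('n) \<ge> 2"
    and "open U"
    and "local_lie_group U eps"
  shows "\<forall>x\<in>U. \<forall>i r k j. hat_d eps (torsion eps) x i r k j = 0"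
proof (intro ballI allI)
  fix x i r k j assume x: "x \<in> U"
  interpret lsp U eps using assms(2,3) unfolding local_lie_group_def by unfold_locales auto
  note LL = assms(3)
  have e1: "pd (\<lambda>y. torsion eps y i k j) r x = (\<Sum>m\<in>UNIV. Chr eps x i r m * torsion eps x m k j)
     - (\<Sum>b\<in>UNIV. Chr eps x b r k * torsion eps x i b j) - (\<Sum>a\<in>UNIV. Chr eps x a r j * torsion eps x i k a)"
    by (rule E1[OF LL x])
  have e2: "pd (\<lambda>y. torsion eps y i r j) k x = (\<Sum>m\<in>UNIV. Chr eps x i k m * torsion eps x m r j)
     - (\<Sum>b\<in>UNIV. Chr eps x b k r * torsion eps x i b j) - (\<Sum>a\<in>UNIV. Chr eps x a k j * torsion eps x i r a)"
    by (rule E1[OF LL x])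
  have e3: "pd (\<lambda>y. torsion eps y i k r) j x = (\<Sum>m\<in>UNIV. Chr eps x i j m * torsion eps x m k r)
     - (\<Sum>b\<in>UNIV. Chr eps x b j k * torsion eps x i b r) - (\<Sum>a\<in>UNIV. Chr eps x a j r * torsion eps x i k a)"
    by (rule E1[OF LL x])
  have t1: "pd (\<lambda>y. torsion eps y i k j) r x = pd (\<lambda>y. Chr eps y i k j) r x - pd (\<lambda>y. Chr eps y i j k) r x"
    by (rule pd_tors[OF x])
  have t2: "pd (\<lambda>y. torsion eps y i r j) k x = pd (\<lambda>y. Chr eps y i r j) k x - pd (\<lambda>y. Chr eps y i j r) k x"
    by (rule pd_tors[OF x])
  have t3: "pd (\<lambda>y. torsion eps y i k r) j x = pd (\<lambda>y. Chr eps y i k r) j x - pd (\<lambda>y. Chr eps y i r k) j x"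
    by (rule pd_tors[OF x])
  have c1: "pd (\<lambda>y. Chr eps y i k j) r x + (\<Sum>a\<in>UNIV. Chr eps x i k a * Chr eps x a r j)
      = pd (\<lambda>y. Chr eps y i r j) k x + (\<Sum>a\<in>UNIV. Chr eps x i r a * Chr eps x a k j)"
    by (rule curv[OF x])
  have c2: "pd (\<lambda>y. Chr eps y i j r) k x + (\<Sum>a\<in>UNIV. Chr eps x i j a * Chr eps x a k r)
      = pd (\<lambda>y. Chr eps y i k r) j x + (\<Sum>a\<in>UNIV. Chr eps x i k a * Chr eps x a j r)"
    by (rule curv[OF x])
  have c3: "pd (\<lambda>y. Chr eps y i r k) j x + (\<Sum>a\<in>UNIV. Chr eps x i r a * Chr eps x a j k)
      = pd (\<lambda>y. Chr eps y i j k) r x + (\<Sum>a\<in>UNIV. Chr eps x i j a * Chr eps x a r k)"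
    by (rule curv[OF x])
  have e1': "pd (\<lambda>y. torsion eps y i k j) r x = (\<Sum>m\<in>UNIV. Chr eps x i r m * Chr eps x m k j)
     - (\<Sum>m\<in>UNIV. Chr eps x i r m * Chr eps x m j k)
     - (\<Sum>b\<in>UNIV. Chr eps x b r k * Chr eps x i b j) + (\<Sum>b\<in>UNIV. Chr eps x b r k * Chr eps x i j b)
     - (\<Sum>a\<in>UNIV. Chr eps x a r j * Chr eps x i k a) + (\<Sum>a\<in>UNIV. Chr eps x a r j * Chr eps x i a k)"
    using e1 unfolding torsion_def by (simp add: right_diff_distrib sum_subtractf)
  show "hat_d eps (torsion eps) x i r k j = 0"
    unfolding hat_d_def hat_d_comp_def
    using e1 e2 e3 t1 t2 t3 c1 c2 c3 unfolding torsion_def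
    by (simp add: right_diff_distrib left_diff_distrib sum_subtractf mult.commute)
qed

end
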